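(* Let $X_m$ be a del Pezzo surface ($m\le 6$) and let $\mathbf v$ be a Chern character satisfying the DL condition. Let $\mathcal V$ be a coherent sheaf with $\operatorname{ch}_0(\mathcal V)=\operatorname{ch}_0(\mathbf v)$ and $\nu(\mathcal V)=\nu(\mathbf v)$. If $\mathcal E$ is an exceptional bundle with $r(\mathcal E)<r(\mathbf v)$ and $\mu(\mathbf v)\le\mu(\mathcal E)\le\mu(\mathbf v)+K_{X_m}^2$ such that $\chi(\mathcal E,\mathcal V)\ge0$, or an exceptional bundle with $r(\mathcal E)<r(\mathbf v)$ and $\mu(\mathbf v)-K_{X_m}^2\le\mu(\mathcal E)\le\mu(\mathbf v)$ such that $\chi(\mathcal V,\mathcal E)\ge 0$, then $\Delta(\mathcal V)\le\Delta(\mathbf v)$.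
   Context: $X_m$ is the blowup of $\mathbb P^2$ at $m$ general points. $\nu=\operatorname{ch}_1/\operatorname{ch}_0$, $\Delta=\nu^2/2-\operatorname{ch}_2/\operatorname{ch}_0$, $\mu=\nu.(-K_{X_m})$. $\chi(\mathcal A,\mathcal B)=\sum(-1)^i\dim\operatorname{Ext}^i(\mathcal A,\mathcal B)$, extended to Chern characters by Riemann–Roch. An object $\mathcal E$ is exceptional if $\operatorname{Ext}^0(\mathcal E,\mathcal E)=\mathbb C$ and $\operatorname{Ext}^i(\mathcal E,\mathcal E)=0$ for $i\neq0$. A Chern character (or torsion-free sheaf) $\mathbf v$ satisfies the DL condition if (DL1) $\chi(\mathcal E,\mathbf v)\le 0$ for every exceptional bundle $\mathcal E$ with $r(\mathcal E)<r(\mathbf v)$ and $\mu(\mathbf v)\le\mu(\mathcal E)\le\mu(\mathbf v)+K_{X_m}^2$, and (DL2) $\chi(\mathbf v,\mathcal E)\le0$ for every exceptional bundle $\mathcal E$ with $r(\mathcal E)<r(\mathbf v)$ and $\mu(\mathbf v)-K_{X_m}^2\le\mu(\mathcal E)\le\mu(\mathbf v)$. *)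

theory Defs
  imports Complex_Main
begin

text \<open>Numerical model of the Chern character on X_m, the blowup of P^2 at m general
points.  Pic(X_m) = Z^(m+1) with basis H, E_1, ..., E_m (index 0 is H, index i the
exceptional curve E_i, 1 \<le> i \<le> m); intersection form diag(1,-1,...,-1).
A Chern character is (ch_0, ch_1, ch_2) with ch_0 \<in> Z, ch_1 \<in> Pic, ch_2 rational-valued
(taken real here).\<close>

record chern =
  rk  :: int
  c1  :: "nat \<Rightarrow> int"
  ch2 :: real

definition dotm :: "nat \<Rightarrow> (nat \<Rightarrow> real) \<Rightarrow> (nat \<Rightarrow> real) \<Rightarrow> real" where
  "dotm m a b = a 0 * b 0 - (\<Sum>i=1..m. a i * b i)"

definition canon :: "nat \<Rightarrow> real" where
  "canon i = (if i = 0 then -3 else 1)"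

definition Ksq :: "nat \<Rightarrow> real" where
  "Ksq m = dotm m canon canon"

definition nu :: "chern \<Rightarrow> nat \<Rightarrow> real" where
  "nu v = (\<lambda>i. real_of_int (c1 v i) / real_of_int (rk v))"

definition Delta :: "nat \<Rightarrow> chern \<Rightarrow> real" where
  "Delta m v = dotm m (nu v) (nu v) / 2 - ch2 v / real_of_int (rk v)"

definition mu :: "nat \<Rightarrow> chern \<Rightarrow> real" where
  "mu m v = dotm m (nu v) (\<lambda>i. - canon i)"

text \<open>Euler pairing chi(A,B) = sum (-1)^i dim Ext^i(A,B), via Riemann--Roch:
  chi(A,B) = \<integral> ch(A)^\<or> ch(B) td(X_m), td(X_m) = (1, -K/2, 1).\<close>
definition chi :: "nat \<Rightarrow> chern \<Rightarrow> chern \<Rightarrow> real" where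
  "chi m A B =
     (let rA = real_of_int (rk A); rB = real_of_int (rk B);
          cA = (\<lambda>i. real_of_int (c1 A i)); cB = (\<lambda>i. real_of_int (c1 B i))
      in rA * rB
         + dotm m (\<lambda>i. rA * cB i - rB * cA i) (\<lambda>i. - canon i / 2)
         + rA * ch2 B + rB * ch2 A - dotm m cA cB)"

text \<open>The DL condition, relative to the set Exc of Chern characters of exceptional
bundles on X_m.\<close>
definition DL :: "nat \<Rightarrow> chern set \<Rightarrow> chern \<Rightarrow> bool" where
  "DL m Exc v \<longleftrightarrow>
     (\<forall>E\<in>Exc. rk E < rk v \<and> mu m v \<le> mu m E \<and> mu m E \<le> mu m v + Ksq m
               \<longrightarrow> chi m E v \<le> 0) \<and>
     (\<forall>E\<in>Exc. rk E < rk v \<and> mu m v - Ksq m \<le> mu m E \<and> mu m E \<le> mu m v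
               \<longrightarrow> chi m v E \<le> 0)"

end

theory Submission
  imports Defs
begin

lemma dotm_cong: "(\<And>i. i \<le> m \<Longrightarrow> a i = a' i) \<Longrightarrow> (\<And>i. i \<le> m \<Longrightarrow> b i = b' i) \<Longrightarrow> dotm m a b = dotm m a' b'"
  unfolding dotm_def by (auto intro!: sum.cong)

theorem lemma7p10:
  fixes m :: nat and Exc :: "chern set" and v V E :: chern
  assumes "m \<le> 6"
    and exc_rank: "\<forall>F\<in>Exc. rk F > 0"
    and "DL m Exc v"
    and "rk V = rk v"
    and "\<forall>i\<le>m. nu V i = nu v i"
    and "E \<in> Exc"
    and "(rk E < rk v \<and> mu m v \<le> mu m E \<and> mu m E \<le> mu m v + Ksq m \<and> chi m E V \<ge> 0)
       \<or> (rk E < rk v \<and> mu m v - Ksq m \<le> mu m E \<and> mu m E \<le> mu m v \<and> chi m V E \<ge> 0)"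
  shows "Delta m V \<le> Delta m v"
proof -
  have rE: "rk E > 0" using exc_rank assms(6) by auto
  have rv: "rk v > 0" using assms(7) rE by auto
  have c: "real_of_int (c1 V i) = real_of_int (c1 v i)" if "i \<le> m" for i
  proof -
    have "nu V i = nu v i" using assms(5) that by auto
    then show ?thesis using rv assms(4) unfolding nu_def by (simp add: divide_cancel_right)
  qed
  have chi1: "chi m E V = chi m E v + real_of_int (rk E) * (ch2 V - ch2 v)"
  proof -
    have d1: "dotm m (\<lambda>i. real_of_int (rk E) * real_of_int (c1 V i) - real_of_int (rk V) * real_of_int (c1 E i)) (\<lambda>i. - canon i / 2)
        = dotm m (\<lambda>i. real_of_int (rk E) * real_of_int (c1 v i) - real_of_int (rk v) * real_of_int (c1 E i)) (\<lambda>i. - canon i / 2)"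
      by (rule dotm_cong) (auto simp: c assms(4))
    have d2: "dotm m (\<lambda>i. real_of_int (c1 E i)) (\<lambda>i. real_of_int (c1 V i)) = dotm m (\<lambda>i. real_of_int (c1 E i)) (\<lambda>i. real_of_int (c1 v i))"
      by (rule dotm_cong) (auto simp: c)
    show ?thesis unfolding chi_def Let_def d1 d2 by (simp add: assms(4) algebra_simps)
  qed
  have chi2: "chi m V E = chi m v E + real_of_int (rk E) * (ch2 V - ch2 v)"
  proof -
    have d1: "dotm m (\<lambda>i. real_of_int (rk V) * real_of_int (c1 E i) - real_of_int (rk E) * real_of_int (c1 V i)) (\<lambda>i. - canon i / 2)
        = dotm m (\<lambda>i. real_of_int (rk v) * real_of_int (c1 E i) - real_of_int (rk E) * real_of_int (c1 v i)) (\<lambda>i. - canon i / 2)"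
      by (rule dotm_cong) (auto simp: c assms(4))
    have d2: "dotm m (\<lambda>i. real_of_int (c1 V i)) (\<lambda>i. real_of_int (c1 E i)) = dotm m (\<lambda>i. real_of_int (c1 v i)) (\<lambda>i. real_of_int (c1 E i))"
      by (rule dotm_cong) (auto simp: c)
    show ?thesis unfolding chi_def Let_def d1 d2 by (simp add: assms(4) algebra_simps)
  qed
  have "ch2 V \<ge> ch2 v"
  proof -
    have "chi m E v \<le> 0 \<and> chi m E V \<ge> 0 \<or> chi m v E \<le> 0 \<and> chi m V E \<ge> 0"
      using assms(3,6,7) unfolding DL_def by blast
    then have "real_of_int (rk E) * (ch2 V - ch2 v) \<ge> 0" using chi1 chi2 by auto
    then show ?thesis using rE by (simp add: zero_le_mult_iff)
  qed
  moreover have "dotm m (nu V) (nu V) = dotm m (nu v) (nu v)"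
    by (rule dotm_cong) (use assms(5) in auto)
  ultimately show ?thesis unfolding Delta_def using rv assms(4)
    by (simp add: divide_right_mono)
qed

end
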